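(* Let $E$ be a finite nonempty set and $X\in\mathcal{X}(2)\setminus\mathcal{X}^*(2)$. Then there exist a function $f:2^E\to\mathbb{N}$ with $X=\mathbb{B}_f(2)$, regular functions $C_e:\mathbb{N}\times\mathbb{N}\to\mathbb{R}_+$, $e\in E$, a vector $\vec t\in\mathbb{N}^E$ and integers $d,d'\in\mathbb{N}$ with $|d-d'|=1$ and $\mathbb{B}_f(d),\mathbb{B}_f(d')\neq\emptyset$, such that, writing $Q(\vec t,k)$ for the problem of minimizing $\sum_{e\in E}C_e(x_e;t_e)$ subject to $\vec x\in\mathbb{B}_f(k)$, there is an optimal solution $\vec x^*$ of $Q(\vec t,d)$ with $\|\vec x^*-\vec x'\|>1$ for every optimal solution $\vec x'$ of $Q(\vec t,d')$.
   Context: $\mathbb{N}=\{0,1,2,\dots\}$; $\|\cdot\|$ is the $L_1$-norm; $x(U)=\sum_{e\in U}x_e$. For $f:2^E\to\mathbb{N}$, $\mathbb{B}_f(d)=\{\vec x\in\mathbb{N}^E: x(U)\le f(U)\ \forall U\subseteq E,\ x(E)=d\}$. $f$ is strictly positive if $f(U)>0$ for all nonempty $U$, normalized if $f(\emptyset)=0$, monotonic if $f(U)\le f(V)$ for $U\subseteq V$. $\mathcal{X}(d)=\{\mathbb{B}_f(d): f \text{ strictly positive, normalized, monotonic}\}$, $\mathcal{X}^*(d)=\{\mathbb{B}_f(d): f\text{ strictly positive, normalized, monotonic, submodular}\}$. For $C:\mathbb{N}\times\mathbb{N}\to\mathbb{R}$, $C^-(x;t)=C(x;t)-C(x-1;t)$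 for $x\ge1$; $C$ is regular if $C^-(x;t)\le C^-(x;t+1)$ and $C^-(x;t+1)\le C^-(x+1;t)$ for all $x\ge1,t\in\mathbb{N}$. *)

theory Defs
  imports Main "HOL-Library.Extended_Nat"
begin

definition vecs :: "'a set \<Rightarrow> ('a \<Rightarrow> nat) set" where
  "vecs E = {x. \<forall>e. e \<notin> E \<longrightarrow> x e = 0}"

definition Bf :: "'a set \<Rightarrow> ('a set \<Rightarrow> nat) \<Rightarrow> nat \<Rightarrow> ('a \<Rightarrow> nat) set" where
  "Bf E f d = {x \<in> vecs E. (\<forall>U. U \<subseteq> E \<longrightarrow> sum x U \<le> f U) \<and> sum x E = d}"

definition strictly_positive :: "'a set \<Rightarrow> ('a set \<Rightarrow> nat) \<Rightarrow> bool" where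
  "strictly_positive E f \<longleftrightarrow> (\<forall>U. U \<subseteq> E \<longrightarrow> U \<noteq> {} \<longrightarrow> f U > 0)"

definition normalized :: "('a set \<Rightarrow> nat) \<Rightarrow> bool" where
  "normalized f \<longleftrightarrow> f {} = 0"

definition monotonic :: "'a set \<Rightarrow> ('a set \<Rightarrow> nat) \<Rightarrow> bool" where
  "monotonic E f \<longleftrightarrow> (\<forall>U V. U \<subseteq> V \<longrightarrow> V \<subseteq> E \<longrightarrow> f U \<le> f V)"

definition submodular :: "'a set \<Rightarrow> ('a set \<Rightarrow> nat) \<Rightarrow> bool" where
  "submodular E f \<longleftrightarrow> (\<forall>U V. U \<subseteq> E \<longrightarrow> V \<subseteq> E \<longrightarrow> f (U \<union> V) + f (U \<inter> V) \<le> f U + f V)"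

definition calX :: "'a set \<Rightarrow> nat \<Rightarrow> ('a \<Rightarrow> nat) set set" where
  "calX E d = {Bf E f d | f. strictly_positive E f \<and> normalized f \<and> monotonic E f}"

definition calXstar :: "'a set \<Rightarrow> nat \<Rightarrow> ('a \<Rightarrow> nat) set set" where
  "calXstar E d = {Bf E f d | f. strictly_positive E f \<and> normalized f \<and> monotonic E f
                                  \<and> submodular E f}"

definition Cminus :: "(nat \<Rightarrow> nat \<Rightarrow> real) \<Rightarrow> nat \<Rightarrow> nat \<Rightarrow> real" where
  "Cminus C x t = C x t - C (x - 1) t"

definition regular :: "(nat \<Rightarrow> nat \<Rightarrow> real) \<Rightarrow> bool" where
  "regular C \<longleftrightarrow> (\<forall>x t. x \<ge> 1 \<longrightarrow>
      Cminus C x t \<le> Cminus C x (t + 1) \<and> Cminus C x (t + 1) \<le> Cminus C (x + 1) t)"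

definition total_cost :: "'a set \<Rightarrow> ('a \<Rightarrow> nat \<Rightarrow> nat \<Rightarrow> real) \<Rightarrow> ('a \<Rightarrow> nat) \<Rightarrow> ('a \<Rightarrow> nat) \<Rightarrow> real" where
  "total_cost E C t x = (\<Sum>e\<in>E. C e (x e) (t e))"

definition optimal_sol :: "'a set \<Rightarrow> ('a set \<Rightarrow> nat) \<Rightarrow> ('a \<Rightarrow> nat \<Rightarrow> nat \<Rightarrow> real) \<Rightarrow> ('a \<Rightarrow> nat) \<Rightarrow> nat \<Rightarrow> ('a \<Rightarrow> nat) \<Rightarrow> bool" where
  "optimal_sol E f C t k x \<longleftrightarrow> x \<in> Bf E f k \<and> (\<forall>y \<in> Bf E f k. total_cost E C t x \<le> total_cost E C t y)"

definition l1_dist :: "'a set \<Rightarrow> ('a \<Rightarrow> nat) \<Rightarrow> ('a \<Rightarrow> nat) \<Rightarrow> nat" where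
  "l1_dist E x y = (\<Sum>e\<in>E. nat \<bar>int (x e) - int (y e)\<bar>)"

end

theory Submission
  imports Defs
begin

lemma regular_lin: "regular (\<lambda>x s. real (w * x))"
proof -
  have "Cminus (\<lambda>x s. real (w * x)) x t = real w" if x1: "x \<ge> 1" for x t
  proof -
    obtain k where "x = Suc k" using x1 by (cases x) auto
    then show ?thesis by (simp add: Cminus_def algebra_simps)
  qed
  then show ?thesis unfolding regular_def by auto
qed

theorem theorem6p5:
  fixes E :: "'a set" and X :: "('a \<Rightarrow> nat) set"
  assumes "finite E" and "E \<noteq> {}"
    and "X \<in> calX E 2 - calXstar E 2"
  shows "\<exists>f C t d d'.
           X = Bf E f 2 \<and>
           (\<forall>e\<in>E. regular (C e) \<and> (\<forall>x s. C e x s \<ge> 0)) \<and>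
           t \<in> vecs E \<and>
           \<bar>int d - int d'\<bar> = 1 \<and> Bf E f d \<noteq> {} \<and> Bf E f d' \<noteq> {} \<and>
           (\<exists>xs. optimal_sol E f C t d xs \<and>
                 (\<forall>x'. optimal_sol E f C t d' x' \<longrightarrow> l1_dist E xs x' > 1))"
proof -
  note fin = assms(1)
  obtain f0 where X: "X = Bf E f0 2" and sp: "strictly_positive E f0"
    and nm: "normalized f0" and mo: "monotonic E f0"
    using assms(3) unfolding calX_def by auto
  have Xmem: "y \<in> vecs E" "sum y E = 2" "\<And>U. U \<subseteq> E \<Longrightarrow> sum y U \<le> f0 U" if "y \<in> X" for y
    using that X unfolding Bf_def by auto
  have sub_le: "sum y U \<le> sum y E" if "U \<subseteq> E" for y :: "'a \<Rightarrow> nat" and U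
    using sum_mono2[OF fin that] by auto
  define g where "g U = (if U = {} then 0 else if (\<exists>y\<in>X. 2 \<le> sum y U) then 2 else (1::nat))" for U
  have g_mono: "monotonic E g"
    unfolding monotonic_def
  proof (intro allI impI)
    fix U V assume uv: "U \<subseteq> V" "V \<subseteq> E"
    have fV: "finite V" using uv fin finite_subset by blast
    show "g U \<le> g V"
    proof (cases "U = {}")
      case True then show ?thesis by (simp add: g_def)
    next
      case False
      then have "V \<noteq> {}" using uv by auto
      moreover have "(\<exists>y\<in>X. 2 \<le> sum y U) \<Longrightarrow> (\<exists>y\<in>X. 2 \<le> sum y V)"
      proof -
        assume "\<exists>y\<in>X. 2 \<le> sum y U"
        then obtain y where "y \<in> X" "2 \<le> sum y U" by blast
        moreover have "sum y U \<le> sum y V" using sum_mono2[OF fV uv(1)] by auto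
        ultimately show ?thesis by (meson order_trans)
      qed
      ultimately show ?thesis using False by (auto simp: g_def)
    qed
  qed
  have g_sp: "strictly_positive E g" unfolding strictly_positive_def g_def by auto
  have g_nm: "normalized g" unfolding normalized_def g_def by auto
  have gX: "Bf E g 2 = X"
  proof
    show "X \<subseteq> Bf E g 2"
    proof
      fix y assume y: "y \<in> X"
      have "sum y U \<le> g U" if "U \<subseteq> E" for U
        using sub_le[OF that, of y] Xmem(2)[OF y] y by (auto simp: g_def)
      then show "y \<in> Bf E g 2" using Xmem[OF y] unfolding Bf_def by auto
    qed
  next
    show "Bf E g 2 \<subseteq> X"
    proof
      fix y assume y: "y \<in> Bf E g 2"
      have "g U \<le> f0 U" if "U \<subseteq> E" for U
      proof -
        have "U \<noteq> {} \<Longrightarrow> f0 U > 0" using sp that unfolding strictly_positive_def by auto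
        moreover have "(\<exists>y\<in>X. 2 \<le> sum y U) \<Longrightarrow> 2 \<le> f0 U"
          using Xmem(3) that by (meson order_trans)
        ultimately show ?thesis by (cases "U = {}") (simp_all add: g_def)
      qed
      then show "y \<in> X" using y unfolding X Bf_def by (auto intro: order_trans)
    qed
  qed
  have "\<not> submodular E g"
  proof
    assume "submodular E g"
    then have "X \<in> calXstar E 2" unfolding calXstar_def using g_sp g_nm g_mono gX by blast
    then show False using assms(3) by blast
  qed
  then obtain U V where UV: "U \<subseteq> E" "V \<subseteq> E" and ns: "g (U \<union> V) + g (U \<inter> V) > g U + g V"
    unfolding submodular_def by (auto simp: not_le)
  have fU: "finite U" and fV: "finite V" using UV fin finite_subset by auto
  have gle2: "g W \<le> 2" for W by (simp add: g_def)
  have g0: "g {} = 0" by (simp add: g_def)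
  have gpos: "W \<noteq> {} \<Longrightarrow> 1 \<le> g W" for W by (simp add: g_def)
  have gempty: "g W = 0 \<Longrightarrow> W = {}" for W by (simp add: g_def split: if_splits)
  have m1: "g (U \<inter> V) \<le> g V" using g_mono UV unfolding monotonic_def by auto
  have m2: "g (U \<inter> V) \<le> g U" using g_mono UV unfolding monotonic_def by auto
  have Une: "U \<noteq> {}" proof assume "U = {}" then show False using ns g0 by simp qed
  have Vne: "V \<noteq> {}" proof assume "V = {}" then show False using ns g0 by simp qed
  have gU: "g U = 1" using gpos[OF Une] gle2[of U] gle2[of "U \<union> V"] m1 ns by linarith
  have gV: "g V = 1" using gpos[OF Vne] gle2[of V] gle2[of "U \<union> V"] m2 ns by linarith
  have gW: "g (U \<union> V) = 2" using gU gV m2 ns gle2[of "U \<union> V"] by linarith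
  have gI: "U \<inter> V \<noteq> {}" proof assume "U \<inter> V = {}" then show False using ns g0 gU gV gle2[of "U \<union> V"] by simp qed
  have XU: "sum y U \<le> 1" if "y \<in> X" for y proof -
    have "\<not> 2 \<le> sum y U" using gU that Une by (auto simp: g_def split: if_splits)
    then show ?thesis by linarith
  qed
  have XV: "sum y V \<le> 1" if "y \<in> X" for y proof -
    have "\<not> 2 \<le> sum y V" using gV that Vne by (auto simp: g_def split: if_splits)
    then show ?thesis by linarith
  qed
  obtain x where x: "x \<in> X" "2 \<le> sum x (U \<union> V)" using gW by (simp add: g_def split: if_splits) blast
  obtain b where b: "b \<in> U" "b \<in> V" using gI by auto
  have bE: "b \<in> E" using b UV by auto
  have ui: "sum y (U \<union> V) + sum y (U \<inter> V) = sum y U + sum y V" for y :: "'a \<Rightarrow> nat"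
    using sum.union_inter[OF fU fV] .
  define W where "W = U \<union> V"
  have WE: "W \<subseteq> E" using UV W_def by auto
  have splitE: "sum y E = sum y (E - W) + sum y W" for y :: "'a \<Rightarrow> nat"
    using sum.subset_diff[OF WE fin] .
  define w where "w e = (if e = b then 0 else if e \<in> W then 1 else (3::nat))" for e
  define C where "C e = (\<lambda>x (s::nat). real (w e * x))" for e :: 'a
  define t where "t = (\<lambda>e::'a. 0::nat)"
  define xs where "xs = (\<lambda>e. if e = b then 1 else (0::nat))"
  have cost: "total_cost E C t y = real (\<Sum>e\<in>E. w e * y e)" for y
    unfolding total_cost_def C_def by simp
  have xI: "sum x (U \<inter> V) = 0" using ui[of x] XU[OF x(1)] XV[OF x(1)] x(2) by linarith
  have xb: "x b = 0"
  proof -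
    have "x b \<le> sum x (U \<inter> V)" using b fU by (intro member_le_sum) auto
    then show ?thesis using xI by simp
  qed
  have xout: "sum x (E - W) = 0" using splitE[of x] Xmem(2)[OF x(1)] x(2) sub_le[OF WE, of x]
    unfolding W_def by linarith
  have xcost: "(\<Sum>e\<in>E. w e * x e) \<le> 2"
  proof -
    have "w e * x e \<le> x e" if "e \<in> E" for e
    proof (cases "e \<in> W")
      case True then show ?thesis by (auto simp: w_def)
    next
      case False
      then have "x e = 0" using xout that fin by (simp add: sum_eq_0_iff)
      then show ?thesis by simp
    qed
    then have "(\<Sum>e\<in>E. w e * x e) \<le> sum x E" by (rule sum_mono)
    then show ?thesis using Xmem(2)[OF x(1)] by simp
  qed
  have bigcost: "3 \<le> (\<Sum>e\<in>E. w e * y e)" if y: "y \<in> X" "1 \<le> y b" for y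
  proof -
    have "y b \<le> sum y (U \<inter> V)" using b fU by (intro member_le_sum) auto
    then have "sum y W \<le> 1" using ui[of y] XU[OF y(1)] XV[OF y(1)] y(2) unfolding W_def by linarith
    then have o: "1 \<le> sum y (E - W)" using splitE[of y] Xmem(2)[OF y(1)] by linarith
    have "(\<Sum>e\<in>E - W. w e * y e) = (\<Sum>e\<in>E - W. 3 * y e)"
      using b by (intro sum.cong) (auto simp: w_def W_def)
    also have "\<dots> = 3 * sum y (E - W)" by (simp add: sum_distrib_left)
    finally have "3 \<le> (\<Sum>e\<in>E - W. w e * y e)" using o by linarith
    also have "\<dots> \<le> (\<Sum>e\<in>E. w e * y e)" using fin by (intro sum_mono2) auto
    finally show ?thesis .
  qed
  have xsB: "xs \<in> Bf E f0 1"
  proof -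
    have "xs \<in> vecs E" using bE unfolding vecs_def xs_def by auto
    moreover have "sum xs E = 1" using bE fin unfolding xs_def by simp
    moreover have "sum xs U' \<le> f0 U'" if "U' \<subseteq> E" for U'
    proof -
      have fU': "finite U'" using that fin finite_subset by auto
      have "sum xs U' = (if b \<in> U' then 1 else 0)" using fU' unfolding xs_def by simp
      moreover have "b \<in> U' \<Longrightarrow> f0 U' > 0" using sp that unfolding strictly_positive_def by auto
      ultimately show ?thesis by auto
    qed
    ultimately show ?thesis unfolding Bf_def by auto
  qed
  have opt1: "optimal_sol E f0 C t 1 xs"
  proof -
    have "total_cost E C t xs \<le> total_cost E C t y" for y
    proof -
      have "(\<Sum>e\<in>E. w e * xs e) = 0" unfolding xs_def w_def by (auto intro: sum.neutral)
      then show ?thesis unfolding cost by (simp del: of_nat_sum)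
    qed
    then show ?thesis using xsB unfolding optimal_sol_def by auto
  qed
  have far: "l1_dist E xs x' > 1" if o: "optimal_sol E f0 C t 2 x'" for x'
  proof -
    have x'X: "x' \<in> X" using o X unfolding optimal_sol_def by auto
    have "total_cost E C t x' \<le> total_cost E C t x" using o x(1) X unfolding optimal_sol_def by auto
    then have "(\<Sum>e\<in>E. w e * x' e) \<le> 2" using xcost unfolding cost by linarith
    then have x'b: "x' b = 0" using bigcost[OF x'X] by (cases "x' b") auto
    have "l1_dist E xs x' = (\<Sum>e\<in>E. xs e + x' e)"
      unfolding l1_dist_def using x'b by (intro sum.cong) (auto simp: xs_def)
    also have "\<dots> = 3" using xsB Xmem(2)[OF x'X] by (simp add: sum.distrib Bf_def)
    finally show ?thesis by simp
  qed
  have Cok: "\<forall>e\<in>E. regular (C e) \<and> (\<forall>x s. C e x s \<ge> 0)"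
    unfolding C_def using regular_lin by auto
  have tv: "t \<in> vecs E" unfolding t_def vecs_def by auto
  have ne2: "Bf E f0 2 \<noteq> {}" using x(1) X by auto
  have ne1: "Bf E f0 1 \<noteq> {}" using xsB by blast
  have ab: "\<bar>int 1 - int 2\<bar> = (1::int)" by simp
  have ex: "\<exists>xs. optimal_sol E f0 C t 1 xs \<and>
                 (\<forall>x'. optimal_sol E f0 C t 2 x' \<longrightarrow> l1_dist E xs x' > 1)"
    using opt1 far by blast
  show ?thesis
    apply (rule exI[of _ f0], rule exI[of _ C], rule exI[of _ t], rule exI[of _ 1], rule exI[of _ 2])
    apply (intro conjI)
          apply (rule X)
         apply (rule Cok)
        apply (rule tv)
       apply (rule ab)
      apply (rule ne1)
     apply (rule ne2)
    apply (rule ex)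
    done
qed

end
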